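(* Let $R>0$ and let $f=(f^1,f^2,f^3):\mathbb R\to\mathbb R^3$ be any circular tractrix with parameter $R$ (in any of the three cases $R>1$, $R=1$, $0<R<1$, with admissible constants $c_1,c_2$). Then $|f'(t)|=|\xi_2(t)|$ for all $t\in\mathbb R$, and for every $t$ with $\xi_2(t)\neq 0$, $$f(t)+\frac{1}{\xi_2(t)}f'(t)=\Big(R\cos\tfrac{t}{R},\,R\sin\tfrac{t}{R},\,0\Big).$$ In particular, for such $t$ the point $f(t)$ is at distance $1$ from the point $(R\cos\frac tR,R\sin\frac tR,0)$ of the circle $C$ of radius $R$ centered at the origin in the plane $x^3=0$, and the segment joining them is tangent to the curve at $f(t)$.
   Context: Coordinates $(x^1,x^2,x^3)$ on $\mathbb R^3$. Fix $R>0$. A circular tractrix with parameter $R$ is the curve $f:\mathbb R\to\mathbb R^3$, $$f(t)=\Big(\xi_1\cos\tfrac tR+\xi_2\sin\tfrac tR,\ -\xi_2\cos\tfrac tR+\xi_1\sin\tfrac tR,\ \xi_3\Big),$$ where $\xi_i=\xi_i(t)$ are given as follows. Case $R>1$: $\lambda=\frac{\sqrt{R^2-1}}{R}$, $\xi_1=\frac{(R-\frac1R)\cosh\lambda t}{\frac{c_1}{R}+\cosh\lambda t}$, $\xi_2=\frac{\lambda\sinh\lambda t}{\frac{c_1}{R}+\cosh\lambda t}$, $\xi_3=\frac{\lambda c_2}{\frac{c_1}{R}+\cosh\lambda t}$, with real constants $c_1^2+c_2^2=1$. Case $R=1$: $\xi_1=\frac{2}{c_1+t^2}$, $\xi_2=\frac{2t}{c_1+t^2}$,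 $\xi_3=\frac{c_2}{c_1+t^2}$, with real constants satisfying $4(c_1-1)=c_2^2$. Case $0<R<1$: $\lambda=\frac{\sqrt{1-R^2}}{R}$, $\xi_1=\frac{(R-\frac1R)\cos\lambda t}{\frac{c_1}{R}+\cos\lambda t}$, $\xi_2=-\frac{\lambda\sin\lambda t}{\frac{c_1}{R}+\cos\lambda t}$, $\xi_3=\frac{\lambda c_2}{\frac{c_1}{R}+\cos\lambda t}$, with real constants $c_1^2-c_2^2=1$. *)

theory Defs
  imports "HOL-Analysis.Analysis"
begin

definition tractrix_admissible :: "real \<Rightarrow> real \<Rightarrow> real \<Rightarrow> bool" where
  "tractrix_admissible R c1 c2 \<longleftrightarrow> R > 0 \<and>
     (R > 1 \<longrightarrow> c1^2 + c2^2 = 1) \<and>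
     (R = 1 \<longrightarrow> 4 * (c1 - 1) = c2^2) \<and>
     (R < 1 \<longrightarrow> c1^2 - c2^2 = 1)"

definition xi1 :: "real \<Rightarrow> real \<Rightarrow> real \<Rightarrow> real \<Rightarrow> real" where
  "xi1 R c1 c2 t =
    (if R > 1 then (let lam = sqrt (R^2 - 1) / R in
        (R - 1/R) * cosh (lam * t) / (c1 / R + cosh (lam * t)))
     else if R = 1 then 2 / (c1 + t^2)
     else (let lam = sqrt (1 - R^2) / R in
        (R - 1/R) * cos (lam * t) / (c1 / R + cos (lam * t))))"

definition xi2 :: "real \<Rightarrow> real \<Rightarrow> real \<Rightarrow> real \<Rightarrow> real" where
  "xi2 R c1 c2 t =
    (if R > 1 then (let lam = sqrt (R^2 - 1) / R in
        lam * sinh (lam * t) / (c1 / R + cosh (lam * t)))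
     else if R = 1 then 2 * t / (c1 + t^2)
     else (let lam = sqrt (1 - R^2) / R in
        - (lam * sin (lam * t) / (c1 / R + cos (lam * t)))))"

definition xi3 :: "real \<Rightarrow> real \<Rightarrow> real \<Rightarrow> real \<Rightarrow> real" where
  "xi3 R c1 c2 t =
    (if R > 1 then (let lam = sqrt (R^2 - 1) / R in
        lam * c2 / (c1 / R + cosh (lam * t)))
     else if R = 1 then c2 / (c1 + t^2)
     else (let lam = sqrt (1 - R^2) / R in
        lam * c2 / (c1 / R + cos (lam * t))))"

definition circ_tractrix :: "real \<Rightarrow> real \<Rightarrow> real \<Rightarrow> real \<Rightarrow> real^3" where
  "circ_tractrix R c1 c2 t =
     vector [xi1 R c1 c2 t * cos (t / R) + xi2 R c1 c2 t * sin (t / R),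
             - xi2 R c1 c2 t * cos (t / R) + xi1 R c1 c2 t * sin (t / R),
             xi3 R c1 c2 t]"

end

theory Submission
  imports Defs
begin

lemma vdecomp: "vector [a,b,c] = a *\<^sub>R (vector [1,0,0] :: real^3) + b *\<^sub>R vector [0,1,0] + c *\<^sub>R vector[0,0,1]"
  by (simp add: vec_eq_iff forall_3 vector_3)
lemma vnorm: "norm (vector [a,b,c] :: real^3) = sqrt (a^2+b^2+c^2)"
  unfolding norm_vec_def L2_set_def UNIV_3 by (simp add: vector_3)

lemma vder3:
  assumes "(a has_real_derivative a') (at t)" "(b has_real_derivative b') (at t)" "(c has_real_derivative c') (at t)"
  shows "((\<lambda>t. vector [a t, b t, c t] :: real^3) has_vector_derivative vector [a', b', c']) (at t)"
proof -
  have "((\<lambda>t. a t *\<^sub>R (vector [1,0,0] :: real^3) + b t *\<^sub>R vector [0,1,0] + c t *\<^sub>R vector[0,0,1]) has_vector_derivative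
     a' *\<^sub>R (vector [1,0,0] :: real^3) + b' *\<^sub>R vector [0,1,0] + c' *\<^sub>R vector[0,0,1]) (at t)"
    using assms unfolding has_real_derivative_iff_has_vector_derivative
    by (intro has_vector_derivative_add; metis (no_types) has_vector_derivative_scaleR[OF _ has_vector_derivative_const] scaleR_zero_right add_0 add.right_neutral has_real_derivative_iff_has_vector_derivative)
  then show ?thesis by (simp only: vdecomp[symmetric])
qed

lemma generic:
  fixes R :: real and x1 x2 x3 :: "real \<Rightarrow> real"
  assumes R: "R > 0"
  and d1: "\<And>t. (x1 has_real_derivative ((R - x1 t) * x2 t - x2 t / R)) (at t)"
  and d2: "\<And>t. (x2 has_real_derivative (x1 t / R - (x2 t)^2)) (at t)"
  and d3: "\<And>t. (x3 has_real_derivative (- x2 t * x3 t)) (at t)"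
  and c: "\<And>t. (R - x1 t)^2 + (x2 t)^2 + (x3 t)^2 = 1"
  defines "f \<equiv> \<lambda>t. vector [x1 t * cos (t / R) + x2 t * sin (t / R),
             - x2 t * cos (t / R) + x1 t * sin (t / R), x3 t] :: real^3"
  shows "(\<forall>t. f differentiable (at t) \<and>
              norm (vector_derivative f (at t)) = \<bar>x2 t\<bar>) \<and>
         (\<forall>t. x2 t \<noteq> 0 \<longrightarrow>
              f t + (1 / x2 t) *\<^sub>R vector_derivative f (at t)
                = vector [R * cos (t / R), R * sin (t / R), 0] \<and>
              dist (f t) (vector [R * cos (t / R), R * sin (t / R), 0]) = 1)"
proof -
  have D: "(f has_vector_derivative vector [x2 t * ((R - x1 t) * cos (t/R) - x2 t * sin (t/R)),
        x2 t * ((R - x1 t) * sin (t/R) + x2 t * cos (t/R)), - x2 t * x3 t]) (at t)" for t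
  proof -
    have a: "((\<lambda>t. x1 t * cos (t / R) + x2 t * sin (t / R)) has_real_derivative
       x2 t * ((R - x1 t) * cos (t/R) - x2 t * sin (t/R))) (at t)"
      using R by (auto intro!: derivative_eq_intros d1 d2 simp: field_simps power2_eq_square)
    have b: "((\<lambda>t. - x2 t * cos (t / R) + x1 t * sin (t / R)) has_real_derivative
       x2 t * ((R - x1 t) * sin (t/R) + x2 t * cos (t/R))) (at t)"
      using R by (auto intro!: derivative_eq_intros d1 d2 simp: field_simps power2_eq_square)
    show ?thesis unfolding f_def by (rule vder3[OF a b d3])
  qed
  have VD: "vector_derivative f (at t) = vector [x2 t * ((R - x1 t) * cos (t/R) - x2 t * sin (t/R)),
        x2 t * ((R - x1 t) * sin (t/R) + x2 t * cos (t/R)), - x2 t * x3 t]" for t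
    using D by (rule vector_derivative_at)
  have N: "norm (vector_derivative f (at t)) = \<bar>x2 t\<bar>" for t
  proof -
    have "(x2 t * ((R - x1 t) * cos (t/R) - x2 t * sin (t/R)))^2 +
        (x2 t * ((R - x1 t) * sin (t/R) + x2 t * cos (t/R)))^2 + (- x2 t * x3 t)^2
      = (x2 t)^2 * (((R - x1 t)^2 + (x2 t)^2) * ((sin (t/R))^2 + (cos (t/R))^2) + (x3 t)^2)"
      by algebra
    also have "\<dots> = (x2 t)^2" by (simp only: sin_cos_squared_add mult_1_right c mult_1_right)
    finally show ?thesis unfolding VD vnorm by simp
  qed
  have E: "f t + (1 / x2 t) *\<^sub>R vector_derivative f (at t) = vector [R * cos (t / R), R * sin (t / R), 0]"
    if "x2 t \<noteq> 0" for t
    using that unfolding VD by (simp add: f_def vec_eq_iff forall_3 vector_3 field_simps)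
  have "dist (f t) (vector [R * cos (t / R), R * sin (t / R), 0]) = 1" if "x2 t \<noteq> 0" for t
  proof -
    have "dist (f t) (vector [R * cos (t / R), R * sin (t / R), 0]) = norm ((1 / x2 t) *\<^sub>R vector_derivative f (at t))"
      unfolding E[OF that, symmetric] dist_norm by (simp add: norm_minus_commute)
    also have "\<dots> = 1" using that N[of t] by simp
    finally show ?thesis .
  qed
  moreover have "f differentiable (at t)" for t using D[of t] differentiableI_vector by blast
  ultimately show ?thesis using N E by blast
qed

lemma caseA:
  fixes R c1 c2 :: real
  assumes R: "R > 1" and c: "c1^2 + c2^2 = 1"
  defines "l \<equiv> sqrt (R^2 - 1) / R"
  defines "x1 \<equiv> \<lambda>t. (R - 1/R) * cosh (l*t) / (c1/R + cosh (l*t))"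
  defines "x2 \<equiv> \<lambda>t. l * sinh (l*t) / (c1/R + cosh (l*t))"
  defines "x3 \<equiv> \<lambda>t. l * c2 / (c1/R + cosh (l*t))"
  shows "\<And>t. (x1 has_real_derivative ((R - x1 t) * x2 t - x2 t / R)) (at t)"
  and "\<And>t. (x2 has_real_derivative (x1 t / R - (x2 t)^2)) (at t)"
  and "\<And>t. (x3 has_real_derivative (- x2 t * x3 t)) (at t)"
  and "\<And>t. (R - x1 t)^2 + (x2 t)^2 + (x3 t)^2 = 1"
proof -
  have R0: "R > 0" "R \<noteq> 0" using R by auto
  have l2: "l^2 * R^2 = R^2 - 1" using R unfolding l_def by (simp add: power_divide)
  have "c1^2 \<le> 1" using c zero_le_power2[of c2] by linarith
  hence c1: "\<bar>c1\<bar> \<le> 1" by (simp add: abs_square_le_1)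
  define Df where "Df = (\<lambda>t. c1/R + cosh (l*t))"
  have Dpos: "Df t > 0" for t
  proof -
    have "\<bar>c1/R\<bar> < 1" using c1 R by (simp add: abs_div)
    moreover have "cosh (l*t) \<ge> 1" by (rule cosh_real_ge_1)
    ultimately show ?thesis unfolding Df_def by linarith
  qed
  have dD: "(Df has_real_derivative l * sinh (l*t)) (at t)" for t
    unfolding Df_def by (auto intro!: derivative_eq_intros)
  have xs: "x1 = (\<lambda>t. (R - 1/R) * cosh (l*t) / Df t)" "x2 = (\<lambda>t. l * sinh (l*t) / Df t)"
     "x3 = (\<lambda>t. l * c2 / Df t)" unfolding x1_def x2_def x3_def Df_def by auto
  fix t
  have Dn: "Df t \<noteq> 0" using Dpos[of t] by simp
  have hyp: "(cosh (l*t))^2 = 1 + (sinh (l*t))^2" by (simp add: cosh_square_eq)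
  have hc: "c1 = R * (Df t - cosh (l*t))" unfolding Df_def using R0 by simp
  show "(x1 has_real_derivative ((R - x1 t) * x2 t - x2 t / R)) (at t)"
    unfolding xs
    apply (rule derivative_eq_intros refl dD)+
    using Dn apply simp
    using Dn R0 apply (simp add: field_simps power2_eq_square)
    done
  show "(x2 has_real_derivative (x1 t / R - (x2 t)^2)) (at t)"
    unfolding xs
    apply (rule derivative_eq_intros refl dD)+
    using Dn apply simp
    using Dn R0 apply (simp add: field_simps power2_eq_square)
    using hc hyp l2 by algebra
  show "(x3 has_real_derivative (- x2 t * x3 t)) (at t)"
    unfolding xs
    apply (rule derivative_eq_intros refl dD)+
    using Dn apply simp
    using Dn R0 apply (simp add: field_simps power2_eq_square)
    done
  show "(R - x1 t)^2 + (x2 t)^2 + (x3 t)^2 = 1"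
    unfolding xs
    using Dn R0 apply (simp add: field_simps power2_eq_square)
    using hc hyp l2 c by algebra
qed

lemma caseB:
  fixes c1 c2 :: real
  assumes c: "4 * (c1 - 1) = c2^2"
  defines "x1 \<equiv> \<lambda>t::real. 2 / (c1 + t^2)"
  defines "x2 \<equiv> \<lambda>t::real. 2 * t / (c1 + t^2)"
  defines "x3 \<equiv> \<lambda>t::real. c2 / (c1 + t^2)"
  shows "\<And>t. (x1 has_real_derivative ((1 - x1 t) * x2 t - x2 t / 1)) (at t)"
  and "\<And>t. (x2 has_real_derivative (x1 t / 1 - (x2 t)^2)) (at t)"
  and "\<And>t. (x3 has_real_derivative (- x2 t * x3 t)) (at t)"
  and "\<And>t. (1 - x1 t)^2 + (x2 t)^2 + (x3 t)^2 = 1"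
proof -
  have "4*(c1-1) \<ge> 0" using c by simp
  hence c1: "c1 \<ge> 1" by simp
  define Df where "Df = (\<lambda>t::real. c1 + t^2)"
  have Dpos: "Df t > 0" for t unfolding Df_def using c1 zero_le_power2[of t] by linarith
  have dD: "(Df has_real_derivative 2 * t) (at t)" for t
    unfolding Df_def by (auto intro!: derivative_eq_intros)
  have xs: "x1 = (\<lambda>t. 2 / Df t)" "x2 = (\<lambda>t. 2 * t / Df t)"
     "x3 = (\<lambda>t. c2 / Df t)" unfolding x1_def x2_def x3_def Df_def by auto
  fix t
  have Dn: "Df t \<noteq> 0" using Dpos[of t] by simp
  have hc: "c1 = Df t - t^2" unfolding Df_def by simp
  show "(x1 has_real_derivative ((1 - x1 t) * x2 t - x2 t / 1)) (at t)"
    unfolding xs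
    apply (rule derivative_eq_intros refl dD)+
    using Dn apply simp
    using Dn apply (simp add: field_simps power2_eq_square)
    done
  show "(x2 has_real_derivative (x1 t / 1 - (x2 t)^2)) (at t)"
    unfolding xs
    apply (rule derivative_eq_intros refl dD)+
    using Dn apply simp
    using Dn apply (simp add: field_simps power2_eq_square)
    done
  show "(x3 has_real_derivative (- x2 t * x3 t)) (at t)"
    unfolding xs
    apply (rule derivative_eq_intros refl dD)+
    using Dn apply simp
    using Dn apply (simp add: field_simps power2_eq_square)
    done
  show "(1 - x1 t)^2 + (x2 t)^2 + (x3 t)^2 = 1"
    unfolding xs
    using Dn apply (simp add: field_simps power2_eq_square)
    using hc c by algebra
qed

lemma caseC:
  fixes R c1 c2 :: real
  assumes R: "R > 0" "R < 1" and c: "c1^2 - c2^2 = 1"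
  defines "l \<equiv> sqrt (1 - R^2) / R"
  defines "x1 \<equiv> \<lambda>t. (R - 1/R) * cos (l*t) / (c1/R + cos (l*t))"
  defines "x2 \<equiv> \<lambda>t. - (l * sin (l*t) / (c1/R + cos (l*t)))"
  defines "x3 \<equiv> \<lambda>t. l * c2 / (c1/R + cos (l*t))"
  shows "\<And>t. (x1 has_real_derivative ((R - x1 t) * x2 t - x2 t / R)) (at t)"
  and "\<And>t. (x2 has_real_derivative (x1 t / R - (x2 t)^2)) (at t)"
  and "\<And>t. (x3 has_real_derivative (- x2 t * x3 t)) (at t)"
  and "\<And>t. (R - x1 t)^2 + (x2 t)^2 + (x3 t)^2 = 1"
proof -
  have R0: "R > 0" "R \<noteq> 0" using R by auto
  have "R^2 \<le> 1" using R by (simp add: power_le_one)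
  hence l2: "l^2 * R^2 = 1 - R^2" using R unfolding l_def
    by (simp add: power_divide)
  have "c1^2 \<ge> 1" using c zero_le_power2[of c2] by linarith
  hence c1: "\<bar>c1\<bar> \<ge> 1" using abs_le_square_iff[of 1 c1] by simp
  define Df where "Df = (\<lambda>t. c1/R + cos (l*t))"
  have Dn: "Df t \<noteq> 0" for t
  proof -
    have "1 < 1/R" using R by simp
    also have "1/R \<le> \<bar>c1/R\<bar>" using c1 R by (simp add: abs_div divide_right_mono)
    finally have "\<bar>c1/R\<bar> > 1" .
    moreover have "\<bar>cos (l*t)\<bar> \<le> 1" by (rule abs_cos_le_one)
    ultimately show ?thesis unfolding Df_def by linarith
  qed
  have dD: "(Df has_real_derivative - (l * sin (l*t))) (at t)" for t
    unfolding Df_def by (auto intro!: derivative_eq_intros)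
  have xs: "x1 = (\<lambda>t. (R - 1/R) * cos (l*t) / Df t)" "x2 = (\<lambda>t. (- l) * sin (l*t) / Df t)"
     "x3 = (\<lambda>t. l * c2 / Df t)" unfolding x1_def x2_def x3_def Df_def by auto
  fix t
  have hyp: "(cos (l*t))^2 = 1 - (sin (l*t))^2" by (simp add: cos_squared_eq)
  have hc: "c1 = R * (Df t - cos (l*t))" unfolding Df_def using R0 by simp
  show "(x1 has_real_derivative ((R - x1 t) * x2 t - x2 t / R)) (at t)"
    unfolding xs
    apply (rule derivative_eq_intros refl dD)+
    using Dn apply simp
    using Dn[of t] R0 apply (simp add: field_simps power2_eq_square)
    done
  show "(x2 has_real_derivative (x1 t / R - (x2 t)^2)) (at t)"
    unfolding xs
    apply (rule derivative_eq_intros refl dD)+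
    using Dn apply simp
    using Dn[of t] R0 apply (simp add: field_simps power2_eq_square)
    using hc hyp l2 by algebra
  show "(x3 has_real_derivative (- x2 t * x3 t)) (at t)"
    unfolding xs
    apply (rule derivative_eq_intros refl dD)+
    using Dn apply simp
    using Dn[of t] R0 apply (simp add: field_simps power2_eq_square)
    done
  show "(R - x1 t)^2 + (x2 t)^2 + (x3 t)^2 = 1"
    unfolding xs
    using Dn[of t] R0 apply (simp add: field_simps power2_eq_square)
    using hc hyp l2 c by algebra
qed

theorem mainTheorem1:
  fixes R c1 c2 :: real
  assumes "R > 0" and "tractrix_admissible R c1 c2"
  defines "f \<equiv> circ_tractrix R c1 c2"
  shows "(\<forall>t. f differentiable (at t) \<and>
              norm (vector_derivative f (at t)) = \<bar>xi2 R c1 c2 t\<bar>) \<and>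
         (\<forall>t. xi2 R c1 c2 t \<noteq> 0 \<longrightarrow>
              f t + (1 / xi2 R c1 c2 t) *\<^sub>R vector_derivative f (at t)
                = vector [R * cos (t / R), R * sin (t / R), 0] \<and>
              dist (f t) (vector [R * cos (t / R), R * sin (t / R), 0]) = 1)"
proof -
  let ?x1 = "xi1 R c1 c2" and ?x2 = "xi2 R c1 c2" and ?x3 = "xi3 R c1 c2"
  have f_eq: "f = (\<lambda>t. vector [?x1 t * cos (t / R) + ?x2 t * sin (t / R),
             - ?x2 t * cos (t / R) + ?x1 t * sin (t / R), ?x3 t])"
    unfolding f_def circ_tractrix_def by auto
  have main: "(\<forall>t. (?x1 has_real_derivative ((R - ?x1 t) * ?x2 t - ?x2 t / R)) (at t)) \<and>
    (\<forall>t. (?x2 has_real_derivative (?x1 t / R - (?x2 t)^2)) (at t)) \<and>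
    (\<forall>t. (?x3 has_real_derivative (- ?x2 t * ?x3 t)) (at t)) \<and>
    (\<forall>t. (R - ?x1 t)^2 + (?x2 t)^2 + (?x3 t)^2 = 1)"
  proof (cases "R > 1")
    case True
    have c: "c1^2 + c2^2 = 1" using assms(2) True unfolding tractrix_admissible_def by auto
    have e1: "?x1 = (\<lambda>t. (R - 1/R) * cosh (sqrt (R^2 - 1) / R*t) / (c1/R + cosh (sqrt (R^2 - 1) / R*t)))"
      by (rule ext) (simp add: xi1_def Let_def True)
    have e2: "?x2 = (\<lambda>t. sqrt (R^2 - 1) / R * sinh (sqrt (R^2 - 1) / R*t) / (c1/R + cosh (sqrt (R^2 - 1) / R*t)))"
      by (rule ext) (simp add: xi2_def Let_def True)
    have e3: "?x3 = (\<lambda>t. sqrt (R^2 - 1) / R * c2 / (c1/R + cosh (sqrt (R^2 - 1) / R*t)))"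
      by (rule ext) (simp add: xi3_def Let_def True)
    show ?thesis unfolding e1 e2 e3 using caseA[OF True c] by blast
  next
    case F: False
    show ?thesis
    proof (cases "R = 1")
      case True
      have c: "4 * (c1 - 1) = c2^2" using assms(2) True unfolding tractrix_admissible_def by auto
      have e1: "xi1 1 c1 c2 = (\<lambda>t::real. 2 / (c1 + t^2))"
        by (rule ext) (simp add: xi1_def)
      have e2: "xi2 1 c1 c2 = (\<lambda>t::real. 2 * t / (c1 + t^2))"
        by (rule ext) (simp add: xi2_def)
      have e3: "xi3 1 c1 c2 = (\<lambda>t::real. c2 / (c1 + t^2))"
        by (rule ext) (simp add: xi3_def)
      show ?thesis unfolding True unfolding e1 e2 e3 using caseB[OF c] by blast
    next
      case False
      have R1: "R < 1" using F False by auto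
      have c: "c1^2 - c2^2 = 1" using assms(2) R1 unfolding tractrix_admissible_def by auto
      have e1: "?x1 = (\<lambda>t. (R - 1/R) * cos (sqrt (1 - R^2) / R*t) / (c1/R + cos (sqrt (1 - R^2) / R*t)))"
        by (rule ext) (simp add: xi1_def Let_def F False)
      have e2: "?x2 = (\<lambda>t. - (sqrt (1 - R^2) / R * sin (sqrt (1 - R^2) / R*t) / (c1/R + cos (sqrt (1 - R^2) / R*t))))"
        by (rule ext) (simp add: xi2_def Let_def F False)
      have e3: "?x3 = (\<lambda>t. sqrt (1 - R^2) / R * c2 / (c1/R + cos (sqrt (1 - R^2) / R*t)))"
        by (rule ext) (simp add: xi3_def Let_def F False)
      show ?thesis unfolding e1 e2 e3 using caseC[OF assms(1) R1 c] by blast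
    qed
  qed
  show ?thesis unfolding f_eq
    by (rule generic[OF assms(1)]) (use main in auto)
qed

end
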